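(* Let $\Sigma\subseteq\mathbb{C}$ be a nonempty compact set, $L$ a bounded band operator on $\ell^2(\mathbb{Z})$ with $LS=SL$, and $\gamma\in\mathbb{Z}$. Let $b,c\in\Sigma^{\mathbb{N}}$ and let $H(b)^+$, $H(c)^+$ be the corresponding half-axis generalized Schrödinger operators, with band-width $w$. If $N\in\mathbb{N}$ and \[ b|_{1..w+N-1}=c|_{1..w+N-1}\qquad\text{and}\qquad\mathcal{W}_N(b)\subseteq\mathcal{W}_N(c), \] then $\nu_N(H(b)^+)\ge\nu_N(H(c)^+)$.
   Context: $\mathbb{N}=\{1,2,\dots\}$, $a..b:=\{n\in\mathbb{Z}:a\le n\le b\}$, $(Sx)_n=x_{n-1}$, $(M_ux)_n=u_nx_n$. For $u\in\Sigma^{\mathbb{N}}$, $H(u)^+$ is the operator on $\ell^2(\mathbb{N})$ with matrix $(H_{ij})_{i,j\in\mathbb{N}}$, where $(H_{ij})_{i,j\in\mathbb{Z}}$ is the matrix of $L+S^\gamma M_{\tilde u}$ for any extension $\tilde u\in\Sigma^{\mathbb{Z}}$ of $u$ (independent of the extension). The band-width $w$ is such that matrix entries vanish for $|i-j|>w$. $\mathcal{W}_N(u)$ is the set of all length-$N$ subwords $(u(k),\dots,u(k+N-1))$, $k\in\mathbb{N}$. $\nu_N(T):=\inf\{\|Tx\|:\|x\|=1,\ \operatorname{diam}(\operatorname{supp}x)<N\}$. *)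

theory Defs
  imports "HOL-Analysis.Analysis"
begin

text \<open>Sequences on \<open>\<nat> = {1,2,...}\<close>: functions \<open>nat \<Rightarrow> complex\<close> vanishing at 0.\<close>

definition in_l2Z :: "(int \<Rightarrow> complex) \<Rightarrow> bool" where
  "in_l2Z x \<longleftrightarrow> (\<lambda>i. (cmod (x i))^2) summable_on UNIV"

definition l2Z_norm :: "(int \<Rightarrow> complex) \<Rightarrow> real" where
  "l2Z_norm x = sqrt (infsum (\<lambda>i. (cmod (x i))^2) UNIV)"

definition in_l2N :: "(nat \<Rightarrow> complex) \<Rightarrow> bool" where
  "in_l2N x \<longleftrightarrow> x 0 = 0 \<and> (\<lambda>i. (cmod (x i))^2) summable_on {1..}"

definition l2N_norm :: "(nat \<Rightarrow> complex) \<Rightarrow> real" where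
  "l2N_norm x = sqrt (infsum (\<lambda>i. (cmod (x i))^2) {1..})"

definition shiftZ :: "(int \<Rightarrow> complex) \<Rightarrow> (int \<Rightarrow> complex)" where
  "shiftZ x = (\<lambda>n. x (n - 1))"

definition Lmat :: "((int \<Rightarrow> complex) \<Rightarrow> (int \<Rightarrow> complex)) \<Rightarrow> int \<Rightarrow> int \<Rightarrow> complex" where
  "Lmat L i j = L (\<lambda>k. if k = j then 1 else 0) i"

definition bounded_op_l2Z :: "((int \<Rightarrow> complex) \<Rightarrow> (int \<Rightarrow> complex)) \<Rightarrow> bool" where
  "bounded_op_l2Z L \<longleftrightarrow>
     (\<forall>x y. in_l2Z x \<longrightarrow> in_l2Z y \<longrightarrow> L (\<lambda>n. x n + y n) = (\<lambda>n. L x n + L y n)) \<and>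
     (\<forall>x a. in_l2Z x \<longrightarrow> L (\<lambda>n. a * x n) = (\<lambda>n. a * L x n)) \<and>
     (\<exists>C. \<forall>x. in_l2Z x \<longrightarrow> in_l2Z (L x) \<and> l2Z_norm (L x) \<le> C * l2Z_norm x)"

definition band_op :: "((int \<Rightarrow> complex) \<Rightarrow> (int \<Rightarrow> complex)) \<Rightarrow> bool" where
  "band_op L \<longleftrightarrow> (\<exists>w0::nat. \<forall>i j. int w0 < \<bar>i - j\<bar> \<longrightarrow> Lmat L i j = 0)"

text \<open>Entries of the matrix of \<open>L + S^\<gamma> M_u\<close> on \<open>\<int>\<close>:
  \<open>(S^\<gamma> M_u x)_i = u_{i-\<gamma>} x_{i-\<gamma>}\<close>.\<close>
definition HmatZ :: "((int \<Rightarrow> complex) \<Rightarrow> (int \<Rightarrow> complex)) \<Rightarrow> int \<Rightarrow> (int \<Rightarrow> complex) \<Rightarrow> int \<Rightarrow> int \<Rightarrow> complex" where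
  "HmatZ L \<gamma> u i j = Lmat L i j + (if i - j = \<gamma> then u j else 0)"

text \<open>Half-axis matrix \<open>(H_{ij})_{i,j\<in>\<nat>}\<close>; for \<open>j \<in> \<nat>\<close> the value of any extension at
  \<open>j\<close> is \<open>u j\<close>, hence the independence of the extension.\<close>
definition Hmat_plus :: "((int \<Rightarrow> complex) \<Rightarrow> (int \<Rightarrow> complex)) \<Rightarrow> int \<Rightarrow> (nat \<Rightarrow> complex) \<Rightarrow> nat \<Rightarrow> nat \<Rightarrow> complex" where
  "Hmat_plus L \<gamma> u i j = Lmat L (int i) (int j) + (if int i - int j = \<gamma> then u j else 0)"

definition Hplus :: "((int \<Rightarrow> complex) \<Rightarrow> (int \<Rightarrow> complex)) \<Rightarrow> int \<Rightarrow> (nat \<Rightarrow> complex) \<Rightarrow> (nat \<Rightarrow> complex) \<Rightarrow> (nat \<Rightarrow> complex)" where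
  "Hplus L \<gamma> u x = (\<lambda>i. if 1 \<le> i then infsum (\<lambda>j. Hmat_plus L \<gamma> u i j * x j) {1..} else 0)"

definition is_bandwidth :: "((int \<Rightarrow> complex) \<Rightarrow> (int \<Rightarrow> complex)) \<Rightarrow> int \<Rightarrow> complex set \<Rightarrow> (nat \<Rightarrow> complex) \<Rightarrow> nat \<Rightarrow> bool" where
  "is_bandwidth L \<gamma> \<Sigma> u w \<longleftrightarrow>
     (\<forall>ut. (\<forall>n. ut n \<in> \<Sigma>) \<longrightarrow> (\<forall>n::nat. 1 \<le> n \<longrightarrow> ut (int n) = u n) \<longrightarrow>
        (\<forall>i j. int w < \<bar>i - j\<bar> \<longrightarrow> HmatZ L \<gamma> ut i j = 0))"

text \<open>\<open>diam(supp x) < N\<close> (the diameter of an infinite/unbounded support is infinite).\<close>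
definition supp_diam_lt :: "(nat \<Rightarrow> complex) \<Rightarrow> nat \<Rightarrow> bool" where
  "supp_diam_lt x N \<longleftrightarrow>
     (let S = {i. x i \<noteq> 0} in finite S \<and> (S \<noteq> {} \<longrightarrow> Max S - Min S < N))"

definition nu :: "nat \<Rightarrow> ((nat \<Rightarrow> complex) \<Rightarrow> (nat \<Rightarrow> complex)) \<Rightarrow> real" where
  "nu N T = Inf ((\<lambda>x. l2N_norm (T x)) ` {x. in_l2N x \<and> l2N_norm x = 1 \<and> supp_diam_lt x N})"

definition subwords :: "nat \<Rightarrow> (nat \<Rightarrow> 'a) \<Rightarrow> 'a list set" where
  "subwords N u = {map (\<lambda>i. u (k + i)) [0..<N] | k. 1 \<le> k}"

end

theory Submission
  imports Defs
begin

lemma infsum_fin: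
  fixes f :: "'a \<Rightarrow> 'b::{comm_monoid_add, t2_space}"
  assumes "finite A" "A \<subseteq> B" "\<And>j. j \<in> B \<Longrightarrow> j \<notin> A \<Longrightarrow> f j = 0"
  shows "infsum f B = sum f A"
proof -
  have "infsum f B = infsum f A"
    by (rule infsum_cong_neutral) (use assms in auto)
  also have "\<dots> = sum f A" using assms(1) by (rule infsum_finite)
  finally show ?thesis .
qed

lemma norm_fin:
  assumes "finite A" "A \<subseteq> {1..}" "\<And>j. j \<notin> A \<Longrightarrow> T j = 0"
  shows "l2N_norm T = sqrt (\<Sum>j\<in>A. (cmod (T j))^2)"
  unfolding l2N_norm_def
  by (subst infsum_fin[OF assms(1,2)]) (use assms(3) in auto)

lemma l2N_fin:
  assumes "finite A" "T 0 = 0" "\<And>j. j \<notin> A \<Longrightarrow> T j = 0"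
  shows "in_l2N T"
  unfolding in_l2N_def
proof (intro conjI assms(2) finite_nonzero_values_imp_summable_on)
  show "finite {x \<in> {1..}. (cmod (T x))\<^sup>2 \<noteq> 0}"
    by (rule finite_subset[OF _ assms(1)]) (use assms(3) in auto)
qed

lemma Hplus_fin:
  assumes "finite A" "A \<subseteq> {1..}" "\<And>j. j \<notin> A \<Longrightarrow> x j = 0"
  shows "Hplus L \<gamma> u x i = (if 1 \<le> i then (\<Sum>j\<in>A. Hmat_plus L \<gamma> u i j * x j) else 0)"
  unfolding Hplus_def
  by (subst infsum_fin[OF assms(1)]) (use assms in auto)

lemma e_l2Z: "in_l2Z (\<lambda>k. if k = j then 1 else 0)"
  unfolding in_l2Z_def
  by (rule finite_nonzero_values_imp_summable_on) (rule finite_subset[of _ "{j}"], auto)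

lemma Lmat_shift1:
  assumes "\<forall>x. in_l2Z x \<longrightarrow> L (shiftZ x) = shiftZ (L x)"
  shows "Lmat L (i + 1) (j + 1) = Lmat L i j"
proof -
  define e where "e = (\<lambda>k::int. if k = j then (1::complex) else 0)"
  have e: "(\<lambda>k. if k = j + 1 then 1 else 0) = shiftZ e"
    unfolding shiftZ_def e_def by auto
  have "L (shiftZ e) = shiftZ (L e)" using assms e_l2Z[of j] unfolding e_def by blast
  then have "L (shiftZ e) (i+1) = L e i" by (simp add: shiftZ_def)
  then show ?thesis unfolding Lmat_def e by (simp add: e_def)
qed

lemma Lmat_shift:
  assumes "\<forall>x. in_l2Z x \<longrightarrow> L (shiftZ x) = shiftZ (L x)"
  shows "Lmat L (i + d) (j + d) = Lmat L i j"
  apply (induct d arbitrary: i j rule: int_induct[where k=0])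
    apply simp
   apply (metis Lmat_shift1[OF assms] add.assoc)
  apply (metis Lmat_shift1[OF assms] diff_add_cancel add.assoc)
  done

lemma bw_zero:
  assumes "is_bandwidth L \<gamma> \<Sigma> u w" "\<Sigma> \<noteq> {}" "\<forall>n\<ge>1. u n \<in> \<Sigma>" "1 \<le> j" "int w < \<bar>i - int j\<bar>"
  shows "Lmat L i (int j) + (if i - int j = \<gamma> then u j else 0) = 0"
proof -
  obtain s where s: "s \<in> \<Sigma>" using assms(2) by auto
  define ut where "ut = (\<lambda>n::int. if 1 \<le> n then u (nat n) else s)"
  have h1: "\<forall>n. ut n \<in> \<Sigma>" using assms(3) s unfolding ut_def by auto
  have h2: "\<forall>n::nat. 1 \<le> n \<longrightarrow> ut (int n) = u n" unfolding ut_def by auto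
  have h3: "HmatZ L \<gamma> ut i (int j) = 0"
    using assms(1)[unfolded is_bandwidth_def, rule_format, OF h1[rule_format] h2[rule_format] assms(5)] .
  have h4: "ut (int j) = u j" unfolding ut_def using assms(4) by simp
  show ?thesis using h3 unfolding HmatZ_def h4 .
qed

lemma diam_lemma:
  fixes S :: "nat set"
  assumes "S \<subseteq> {a..<a+N}"
  shows "finite S \<and> (S \<noteq> {} \<longrightarrow> Max S - Min S < N)"
proof -
  have f: "finite S" using assms finite_subset by (metis finite_atLeastLessThan)
  moreover have "S \<noteq> {} \<longrightarrow> Max S - Min S < N"
  proof
    assume "S \<noteq> {}"
    then have "Max S \<in> S" "Min S \<in> S" using f by auto
    then have "a \<le> Min S" "Max S < a + N" using assms by auto
    moreover have "Min S \<le> Max S" using \<open>Max S \<in> S\<close> f by simp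
    ultimately show "Max S - Min S < N" by linarith
  qed
  ultimately show ?thesis by blast
qed

lemma sum_nat_int:
  fixes h :: "int \<Rightarrow> real"
  shows "(\<Sum>i\<in>{1..K::nat}. h (int i)) = (\<Sum>i\<in>{1..int K}. h i)"
proof -
  have "(\<Sum>i\<in>{1..K::nat}. h (int i)) = (\<Sum>i\<in>int ` {1..K}. h i)"
    by (subst sum.reindex) (auto simp: inj_on_def)
  then show ?thesis by (simp add: image_int_atLeastAtMost)
qed

lemma sum_shift_le:
  fixes g :: "int \<Rightarrow> real"
  assumes "\<And>i. g i \<ge> 0" "d < 0 \<Longrightarrow> (\<And>i. i \<le> 0 \<Longrightarrow> g i = 0)" "int K + d = int E"
  shows "(\<Sum>i\<in>{1..K}. g (int i + d)) \<le> (\<Sum>i\<in>{1..E}. g (int i))"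
proof -
  have "(\<Sum>i\<in>{1..K}. g (int i + d)) = (\<Sum>i\<in>{1..int K}. g (i + d))"
    by (rule sum_nat_int)
  also have "\<dots> = (\<Sum>i\<in>(\<lambda>i. i + d) ` {1..int K}. g i)"
    by (subst sum.reindex) (auto simp: inj_on_def)
  also have "\<dots> = (\<Sum>i\<in>{1+d..int E}. g i)"
    using assms(3) by (simp add: image_add_atLeastAtMost')
  also have "\<dots> \<le> (\<Sum>i\<in>{1..int E}. g i)"
  proof (cases "d < 0")
    case True
    have "(\<Sum>i\<in>{1+d..int E}. g i) = (\<Sum>i\<in>{1..int E}. g i)"
      by (rule sum.mono_neutral_right) (use True assms(2) in auto)
    then show ?thesis by simp
  next
    case False
    show ?thesis by (rule sum_mono2) (use False assms(1) in auto)
  qed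
  also have "\<dots> = (\<Sum>i\<in>{1..E}. g (int i))"
    by (rule sum_nat_int[symmetric])
  finally show ?thesis .
qed

lemma shift_sum:
  "(\<Sum>j\<in>{m..<m+N}. f j) = (\<Sum>t\<in>{0..<N}. f (m + t))" for m N :: nat
proof -
  have e: "{m..<m+N} = {0+m..<N+m}" by (simp add: add.commute)
  show ?thesis unfolding e sum.atLeastLessThan_shift_bounds by (simp add: o_def)
qed

lemma key:
  fixes \<Sigma> :: "complex set"
    and L :: "(int \<Rightarrow> complex) \<Rightarrow> (int \<Rightarrow> complex)"
    and \<gamma> :: int
    and b c :: "nat \<Rightarrow> complex"
    and w N :: nat
  assumes ne: "\<Sigma> \<noteq> {}"
    and sh: "\<forall>x. in_l2Z x \<longrightarrow> L (shiftZ x) = shiftZ (L x)"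
    and bS: "\<forall>n\<ge>1. b n \<in> \<Sigma>" and cS: "\<forall>n\<ge>1. c n \<in> \<Sigma>"
    and bw: "is_bandwidth L \<gamma> \<Sigma> b w" and cw: "is_bandwidth L \<gamma> \<Sigma> c w"
    and bc: "\<forall>n\<in>{1..w + N - 1}. b n = c n"
    and sw: "subwords N b \<subseteq> subwords N c"
    and x: "in_l2N x" "l2N_norm x = 1" "supp_diam_lt x N"
  shows "\<exists>y. (in_l2N y \<and> l2N_norm y = 1 \<and> supp_diam_lt y N) \<and>
     l2N_norm (Hplus L \<gamma> c y) \<le> l2N_norm (Hplus L \<gamma> b x)"
proof -
  define S where "S = {i. x i \<noteq> 0}"
  have x0: "x 0 = 0" using x(1) unfolding in_l2N_def by simp
  have Sfin: "finite S" and Sd: "S \<noteq> {} \<longrightarrow> Max S - Min S < N"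
    using x(3) unfolding supp_diam_lt_def S_def Let_def by auto
  have Sne: "S \<noteq> {}"
  proof
    assume "S = {}"
    then have "\<And>i. x i = 0" unfolding S_def by auto
    then have "l2N_norm x = 0" unfolding l2N_norm_def by simp
    then show False using x(2) by simp
  qed
  define m where "m = Min S"
  define M where "M = Max S"
  have mS: "m \<in> S" and MS: "M \<in> S" using Sfin Sne unfolding m_def M_def by auto
  have m1: "1 \<le> m" using mS x0 unfolding S_def by (cases m) auto
  have MmN: "M - m < N" using Sd Sne unfolding m_def M_def by auto
  have mM: "m \<le> M" using Sfin Sne unfolding m_def M_def by auto
  have xz: "\<And>j. j \<notin> {m..<m+N} \<Longrightarrow> x j = 0"
  proof -
    fix j assume "j \<notin> {m..<m+N}"
    moreover have "j \<in> S \<Longrightarrow> m \<le> j \<and> j \<le> M"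
      using Sfin unfolding m_def M_def by auto
    ultimately show "x j = 0" using MmN mM unfolding S_def by fastforce
  qed
  obtain k where k1: "1 \<le> k" and kc: "\<And>t. t < N \<Longrightarrow> c (k+t) = b (m+t)"
    and kcase: "k \<le> m \<or> w < m"
  proof (cases "m \<le> w")
    case True
    show ?thesis
    proof (rule that[of m])
      fix t assume "t < N"
      then have "m + t \<in> {1..w+N-1}" using True m1 by auto
      then show "c (m+t) = b (m+t)" using bc by auto
    qed (use m1 in auto)
  next
    case False
    have "map (\<lambda>i. b (m + i)) [0..<N] \<in> subwords N b"
      unfolding subwords_def using m1 by auto
    then have "map (\<lambda>i. b (m + i)) [0..<N] \<in> subwords N c" using sw by auto
    then obtain k where k1: "1 \<le> k" and kk: "map (\<lambda>i. b (m + i)) [0..<N] = map (\<lambda>i. c (k + i)) [0..<N]"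
      unfolding subwords_def by auto
    show ?thesis
    proof (rule that[of k])
      fix t assume t: "t < N"
      have "map (\<lambda>i. b (m + i)) [0..<N] ! t = map (\<lambda>i. c (k + i)) [0..<N] ! t" by (simp only: kk)
      then show "c (k+t) = b (m+t)" using t by simp
    qed (use k1 False in auto)
  qed
  define y where "y = (\<lambda>j. if k \<le> j \<and> j < k + N then x (j - k + m) else 0)"
  have yz: "\<And>j. j \<notin> {k..<k+N} \<Longrightarrow> y j = 0" unfolding y_def by auto
  have ykt: "\<And>t. t < N \<Longrightarrow> y (k + t) = x (m + t)" unfolding y_def by (simp add: add.commute)
  have y0: "y 0 = 0" using k1 unfolding y_def by auto
  have yl2: "in_l2N y" by (rule l2N_fin[of "{k..<k+N}"]) (use y0 yz in auto)
  have "l2N_norm y = sqrt (\<Sum>j\<in>{k..<k+N}. (cmod (y j))^2)"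
    by (rule norm_fin) (use yz k1 in auto)
  also have "\<dots> = sqrt (\<Sum>t\<in>{0..<N}. (cmod (y (k + t)))^2)"
    by (simp only: shift_sum)
  also have "\<dots> = sqrt (\<Sum>t\<in>{0..<N}. (cmod (x (m + t)))^2)"
    using ykt by simp
  also have "\<dots> = sqrt (\<Sum>j\<in>{m..<m+N}. (cmod (x j))^2)"
    by (simp only: shift_sum)
  also have "\<dots> = l2N_norm x"
    by (rule norm_fin[symmetric]) (use xz m1 in auto)
  finally have yn: "l2N_norm y = 1" using x(2) by simp
  have yd: "supp_diam_lt y N"
    unfolding supp_diam_lt_def Let_def
    by (rule diam_lemma[of _ k]) (use yz in blast)
  define d where "d = int m - int k"
  define Fb where "Fb = (\<lambda>i. \<Sum>t\<in>{0..<N}. (Lmat L i (int (m+t)) + (if i - int (m+t) = \<gamma> then b (m+t) else 0)) * x (m+t))"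
  define Fc where "Fc = (\<lambda>i. \<Sum>t\<in>{0..<N}. (Lmat L i (int (k+t)) + (if i - int (k+t) = \<gamma> then c (k+t) else 0)) * x (m+t))"
  have Hb: "\<And>i. Hplus L \<gamma> b x i = (if 1 \<le> i then Fb (int i) else 0)"
  proof -
    fix i
    have "Hplus L \<gamma> b x i = (if 1 \<le> i then (\<Sum>j\<in>{m..<m+N}. Hmat_plus L \<gamma> b i j * x j) else 0)"
      by (rule Hplus_fin) (use xz m1 in auto)
    also have "(\<Sum>j\<in>{m..<m+N}. Hmat_plus L \<gamma> b i j * x j) = Fb (int i)"
      unfolding shift_sum Fb_def Hmat_plus_def by simp
    finally show "Hplus L \<gamma> b x i = (if 1 \<le> i then Fb (int i) else 0)" .
  qed
  have Hc: "\<And>i. Hplus L \<gamma> c y i = (if 1 \<le> i then Fc (int i) else 0)"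
  proof -
    fix i
    have "Hplus L \<gamma> c y i = (if 1 \<le> i then (\<Sum>j\<in>{k..<k+N}. Hmat_plus L \<gamma> c i j * y j) else 0)"
      by (rule Hplus_fin) (use yz k1 in auto)
    also have "(\<Sum>j\<in>{k..<k+N}. Hmat_plus L \<gamma> c i j * y j) = Fc (int i)"
      unfolding shift_sum Fc_def Hmat_plus_def using ykt by simp
    finally show "Hplus L \<gamma> c y i = (if 1 \<le> i then Fc (int i) else 0)" .
  qed
  have Fbz: "\<And>i. i > int (m+N+w) \<or> (i \<le> 0 \<and> w < m) \<Longrightarrow> Fb i = 0"
  proof -
    fix i assume i: "i > int (m+N+w) \<or> (i \<le> 0 \<and> w < m)"
    show "Fb i = 0" unfolding Fb_def
    proof (rule sum.neutral, rule ballI)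
      fix t assume t: "t \<in> {0..<N}"
      have "int w < \<bar>i - int (m+t)\<bar>" using i t by auto
      then have "Lmat L i (int (m+t)) + (if i - int (m+t) = \<gamma> then b (m+t) else 0) = 0"
        by (intro bw_zero[OF bw ne bS]) (use m1 in auto)
      then show "(Lmat L i (int (m+t)) + (if i - int (m+t) = \<gamma> then b (m+t) else 0)) * x (m+t) = 0"
        by simp
    qed
  qed
  have Fcz: "\<And>i. i > int (k+N+w) \<Longrightarrow> Fc i = 0"
  proof -
    fix i assume i: "i > int (k+N+w)"
    show "Fc i = 0" unfolding Fc_def
    proof (rule sum.neutral, rule ballI)
      fix t assume t: "t \<in> {0..<N}"
      have "int w < \<bar>i - int (k+t)\<bar>" using i t by auto
      then have "Lmat L i (int (k+t)) + (if i - int (k+t) = \<gamma> then c (k+t) else 0) = 0"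
        by (intro bw_zero[OF cw ne cS]) (use k1 in auto)
      then show "(Lmat L i (int (k+t)) + (if i - int (k+t) = \<gamma> then c (k+t) else 0)) * x (m+t) = 0"
        by simp
    qed
  qed
  have Fsh: "\<And>i. Fc i = Fb (i + d)"
    unfolding Fc_def Fb_def
  proof (rule sum.cong[OF refl])
    fix i t assume t: "t \<in> {0..<N}"
    have "Lmat L i (int (k+t)) = Lmat L (i + d) (int (k+t) + d)"
      using Lmat_shift[OF sh] by simp
    also have "int (k+t) + d = int (m+t)" unfolding d_def by simp
    finally have l: "Lmat L i (int (k+t)) = Lmat L (i + d) (int (m+t))" .
    have e: "(i - int (k+t) = \<gamma>) = (i + d - int (m+t) = \<gamma>)" unfolding d_def by auto
    show "(Lmat L i (int (k+t)) + (if i - int (k+t) = \<gamma> then c (k+t) else 0)) * x (m+t) =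
          (Lmat L (i + d) (int (m+t)) + (if i + d - int (m+t) = \<gamma> then b (m+t) else 0)) * x (m+t)"
      using l e kc[of t] t by simp
  qed
  have nb: "l2N_norm (Hplus L \<gamma> b x) = sqrt (\<Sum>i\<in>{1..m+N+w}. (cmod (Fb (int i)))^2)"
  proof -
    have "l2N_norm (Hplus L \<gamma> b x) = sqrt (\<Sum>i\<in>{1..m+N+w}. (cmod (Hplus L \<gamma> b x i))^2)"
      by (rule norm_fin) (use Hb Fbz in auto)
    also have "\<dots> = sqrt (\<Sum>i\<in>{1..m+N+w}. (cmod (Fb (int i)))^2)"
      using Hb by simp
    finally show ?thesis .
  qed
  have nc: "l2N_norm (Hplus L \<gamma> c y) = sqrt (\<Sum>i\<in>{1..k+N+w}. (cmod (Fc (int i)))^2)"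
  proof -
    have "l2N_norm (Hplus L \<gamma> c y) = sqrt (\<Sum>i\<in>{1..k+N+w}. (cmod (Hplus L \<gamma> c y i))^2)"
      by (rule norm_fin) (use Hc Fcz in auto)
    also have "\<dots> = sqrt (\<Sum>i\<in>{1..k+N+w}. (cmod (Fc (int i)))^2)"
      using Hc by simp
    finally show ?thesis .
  qed
  have "(\<Sum>i\<in>{1..k+N+w}. (cmod (Fc (int i)))^2) = (\<Sum>i\<in>{1..k+N+w}. (cmod (Fb (int i + d)))^2)"
    using Fsh by simp
  also have "\<dots> \<le> (\<Sum>i\<in>{1..m+N+w}. (cmod (Fb (int i)))^2)"
  proof (rule sum_shift_le[where g = "\<lambda>i. (cmod (Fb i))^2"])
    show "d < 0 \<Longrightarrow> i \<le> 0 \<Longrightarrow> (cmod (Fb i))^2 = 0" for i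
      using kcase Fbz[of i] unfolding d_def by auto
    show "int (k + N + w) + d = int (m + N + w)" unfolding d_def by simp
  qed simp
  finally have "l2N_norm (Hplus L \<gamma> c y) \<le> l2N_norm (Hplus L \<gamma> b x)"
    unfolding nb nc by (rule real_sqrt_le_mono)
  then show ?thesis using yl2 yn yd by blast
qed

theorem proposition4p8:
  fixes \<Sigma> :: "complex set"
    and L :: "(int \<Rightarrow> complex) \<Rightarrow> (int \<Rightarrow> complex)"
    and \<gamma> :: int
    and b c :: "nat \<Rightarrow> complex"
    and w N :: nat
  assumes "\<Sigma> \<noteq> {}" and "compact \<Sigma>"
    and "bounded_op_l2Z L" and "band_op L"
    and "\<forall>x. in_l2Z x \<longrightarrow> L (shiftZ x) = shiftZ (L x)"
    and "\<forall>n\<ge>1. b n \<in> \<Sigma>" and "\<forall>n\<ge>1. c n \<in> \<Sigma>"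
    and "is_bandwidth L \<gamma> \<Sigma> b w" and "is_bandwidth L \<gamma> \<Sigma> c w"
    and "1 \<le> N"
    and "\<forall>n\<in>{1..w + N - 1}. b n = c n"
    and "subwords N b \<subseteq> subwords N c"
  shows "nu N (Hplus L \<gamma> b) \<ge> nu N (Hplus L \<gamma> c)"
proof -
  define P where "P = {x. in_l2N x \<and> l2N_norm x = 1 \<and> supp_diam_lt x N}"
  define e where "e = (\<lambda>j::nat. if j = 1 then (1::complex) else 0)"
  have ez: "\<And>j. j \<notin> {1} \<Longrightarrow> e j = 0" unfolding e_def by auto
  have "in_l2N e" by (rule l2N_fin[of "{1}"]) (use ez in \<open>auto simp: e_def\<close>)
  moreover have "l2N_norm e = 1" by (subst norm_fin[of "{1}"]) (use ez in \<open>auto simp: e_def\<close>)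
  moreover have "supp_diam_lt e N"
    unfolding supp_diam_lt_def Let_def
    by (rule diam_lemma[of _ 1]) (use \<open>1 \<le> N\<close> in \<open>auto simp: e_def split: if_splits\<close>)
  ultimately have eP: "e \<in> P" unfolding P_def by blast
  have "Inf ((\<lambda>x. l2N_norm (Hplus L \<gamma> c x)) ` P) \<le> Inf ((\<lambda>x. l2N_norm (Hplus L \<gamma> b x)) ` P)"
  proof (rule cInf_mono)
    show "(\<lambda>x. l2N_norm (Hplus L \<gamma> b x)) ` P \<noteq> {}" using eP by blast
    show "bdd_below ((\<lambda>x. l2N_norm (Hplus L \<gamma> c x)) ` P)"
      by (rule bdd_belowI[of _ 0]) (auto simp: l2N_norm_def intro!: infsum_nonneg)
    fix r assume "r \<in> (\<lambda>x. l2N_norm (Hplus L \<gamma> b x)) ` P"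
    then obtain x where xP: "x \<in> P" and r: "r = l2N_norm (Hplus L \<gamma> b x)" by blast
    have "\<exists>y. (in_l2N y \<and> l2N_norm y = 1 \<and> supp_diam_lt y N) \<and>
     l2N_norm (Hplus L \<gamma> c y) \<le> l2N_norm (Hplus L \<gamma> b x)"
      by (rule key[of \<Sigma>]) (use assms xP in \<open>auto simp: P_def\<close>)
    then show "\<exists>a\<in>(\<lambda>x. l2N_norm (Hplus L \<gamma> c x)) ` P. a \<le> r"
      unfolding r P_def by blast
  qed
  then show ?thesis unfolding nu_def P_def .
qed

end
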